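(* Let $k\ge2$, $n\ge1$, $m=kn-1$, and let $\varphi\in C^\infty(\mathbb P_m\mathbb C)$ be $g$-admissible and $G_{n,k}$-invariant. Then for all real $0<\zeta_i\le1$ ($0\le i\le k-1$), $$(\varphi-\psi)([1,\zeta_0^{[n-1]},\zeta_1^{[n]},\dots,\zeta_{k-1}^{[n]}])\ge(\varphi-\psi)([1,\zeta_0^{[n-1]},\gamma^{[(k-1)n]}]),$$ where $\zeta^{[d]}=(\zeta,\dots,\zeta)\in\mathbb C^d$ and $\gamma=(\zeta_1\cdots\zeta_{k-1})^{1/(k-1)}$.
   Context: Homogeneous coordinates on $\mathbb P_m\mathbb C$, $m=kn-1$, are written $[z_0,\dots,z_m]=[Z_0,\dots,Z_{k-1}]$ with blocks $Z_h=(z_{hn},\dots,z_{(h+1)n-1})$. The metric $g$ has components $g_{\lambda\bar\mu}=a_m\,\partial^2\ln(1+|z_1|^2+\cdots+|z_m|^2)/\partial z_\lambda\partial\bar z_\mu$ in the chart $\{z_0=1\}$, for a fixed $a_m>0$. $\varphi$ is $g$-admissible if $g_{\lambda\bar\mu}+\partial^2\varphi/\partial z_\lambda\partial\bar z_\mu$ is positive definite everywhere. $G_{n,k}$ is the automorphism group generated by swaps of two blocks $Z_i,Z_j$, multiplication of a single coordinate $z_p$ by $e^{i\theta}$, and transpositions of two coordinates in the same block. $\psi([z_0,\dots,z_m])=\ln\big((|z_0|\cdots|z_m|)^{2a_m/(m+1)}/(|z_0|^2+\cdots+|z_m|^2)^{a_m}\big)$, defined where all $z_p\ne0$. *)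

theory Defs
  imports "HOL-Analysis.Analysis"
begin

text \<open>C-infinity smoothness on an open set: differentiable, and every
  directional derivative is again smooth (coinductively).\<close>
coinductive smooth_on :: "'a::real_normed_vector set \<Rightarrow> ('a \<Rightarrow> real) \<Rightarrow> bool" where
  "open S \<Longrightarrow> f differentiable_on S \<Longrightarrow>
   (\<forall>u. smooth_on S (\<lambda>z. frechet_derivative f (at z) u)) \<Longrightarrow> smooth_on S f"

definition dird :: "'a::real_normed_vector \<Rightarrow> ('a \<Rightarrow> real) \<Rightarrow> 'a \<Rightarrow> real" where
  "dird u f z = frechet_derivative f (at z) u"

text \<open>Wirtinger second derivative  d^2 f / dz_l d(conj z_m).\<close>
definition wirt2 :: "(complex^'i \<Rightarrow> real) \<Rightarrow> 'i \<Rightarrow> 'i \<Rightarrow> complex^'i \<Rightarrow> complex" where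
  "wirt2 f l m z =
     (let X = (\<lambda>q. axis q (1::complex)); Y = (\<lambda>q. axis q \<i>);
          D2 = (\<lambda>a b. complex_of_real (dird a (dird b f) z))
      in (D2 (X l) (X m) + \<i> * D2 (X l) (Y m) - \<i> * D2 (Y l) (X m) + D2 (Y l) (Y m)) / 4)"

definition pos_def_herm :: "nat set \<Rightarrow> (nat \<Rightarrow> nat \<Rightarrow> complex) \<Rightarrow> bool" where
  "pos_def_herm I H \<longleftrightarrow> (\<forall>l\<in>I. \<forall>m\<in>I. H l m = cnj (H m l)) \<and>
     (\<forall>v. (\<exists>l\<in>I. v l \<noteq> 0) \<longrightarrow> Re (\<Sum>l\<in>I. \<Sum>m\<in>I. H l m * v l * cnj (v m)) > 0)"

text \<open>Homogeneous coordinates z_0..z_{N-1}; idx is the bijection from {..<N} onto the index type.\<close>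
definition coord :: "(nat \<Rightarrow> 'i) \<Rightarrow> nat \<Rightarrow> complex^'i \<Rightarrow> nat \<Rightarrow> complex" where
  "coord idx N z p = z $ idx p"

definition mk_point :: "(nat \<Rightarrow> 'i) \<Rightarrow> nat \<Rightarrow> (nat \<Rightarrow> complex) \<Rightarrow> complex^'i" where
  "mk_point idx N c = (\<chi> q. c (the_inv_into {..<N} idx q))"

definition logsq :: "complex^'i \<Rightarrow> real" where
  "logsq z = ln (\<Sum>q\<in>UNIV. (cmod (z $ q))^2)"

text \<open>g-admissibility of phi (given by its scale-invariant lift Phi), checked in every
  standard affine chart {z_j = 1}, in the affine coordinates z_p, p \<noteq> j.\<close>
definition admissible :: "real \<Rightarrow> (nat \<Rightarrow> 'i) \<Rightarrow> nat \<Rightarrow> (complex^'i \<Rightarrow> real) \<Rightarrow> bool" where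
  "admissible a idx N Phi \<longleftrightarrow>
     (\<forall>j<N. \<forall>z. z $ idx j = 1 \<longrightarrow>
        pos_def_herm ({..<N} - {j})
          (\<lambda>l m. complex_of_real a * wirt2 logsq (idx l) (idx m) z + wirt2 Phi (idx l) (idx m) z))"

definition perm_pt :: "(nat \<Rightarrow> 'i) \<Rightarrow> nat \<Rightarrow> (nat \<Rightarrow> nat) \<Rightarrow> complex^'i \<Rightarrow> complex^'i" where
  "perm_pt idx N \<sigma> z = mk_point idx N (\<lambda>p. coord idx N z (\<sigma> p))"

definition swap_idx :: "nat \<Rightarrow> nat \<Rightarrow> nat \<Rightarrow> nat" where
  "swap_idx p q r = (if r = p then q else if r = q then p else r)"

definition block_swap :: "nat \<Rightarrow> nat \<Rightarrow> nat \<Rightarrow> nat \<Rightarrow> nat" where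
  "block_swap n i j p = (if p div n = i then j * n + p mod n
                         else if p div n = j then i * n + p mod n else p)"

definition phase_pt :: "(nat \<Rightarrow> 'i) \<Rightarrow> nat \<Rightarrow> real \<Rightarrow> complex^'i \<Rightarrow> complex^'i" where
  "phase_pt idx p \<theta> z = (\<chi> q. if q = idx p then cis \<theta> * z $ q else z $ q)"

definition psi :: "real \<Rightarrow> complex^'i \<Rightarrow> real" where
  "psi a z = ln ((\<Prod>q\<in>UNIV. cmod (z $ q)) powr (2 * a / real CARD('i))
                 / (\<Sum>q\<in>UNIV. (cmod (z $ q))^2) powr a)"

end

theory Submission
  imports Defs
begin

lemma vec_expand:
  fixes v :: "complex^'i::finite"
  shows "v = (\<Sum>q\<in>UNIV. Re (v$q) *\<^sub>R axis q 1 + Im (v$q) *\<^sub>R axis q \<i>)"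
proof -
  have e: "\<And>r q. (Re (v$q) *\<^sub>R axis q 1 + Im (v$q) *\<^sub>R axis q \<i>) $ r = (if q = r then v$r else 0)"
    by (auto simp: axis_def complex_eq_iff)
  show ?thesis unfolding vec_eq_iff sum_component e by simp
qed

lemma lin_expand:
  fixes L :: "complex^'i::finite \<Rightarrow> real"
  assumes "linear L"
  shows "L v = (\<Sum>q\<in>UNIV. Re (v$q) * L (axis q 1) + Im (v$q) * L (axis q \<i>))"
proof -
  have "L v = L (\<Sum>q\<in>UNIV. Re (v$q) *\<^sub>R axis q 1 + Im (v$q) *\<^sub>R axis q \<i>)"
    using vec_expand[of v] by simp
  also have "\<dots> = (\<Sum>q\<in>UNIV. L (Re (v$q) *\<^sub>R axis q 1 + Im (v$q) *\<^sub>R axis q \<i>))"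
    using assms by (simp add: real_vector.linear_sum)
  also have "\<dots> = (\<Sum>q\<in>UNIV. Re (v$q) * L (axis q 1) + Im (v$q) * L (axis q \<i>))"
    using assms by (simp add: real_vector.linear_add linear_cmul)
  finally show ?thesis .
qed

lemma curve1:
  fixes f :: "'a::real_normed_vector \<Rightarrow> real"
  assumes fd: "f differentiable (at (\<gamma> t))"
    and g: "(\<gamma> has_vector_derivative \<gamma>1) (at t)"
  shows "((\<lambda>t. f (\<gamma> t)) has_real_derivative frechet_derivative f (at (\<gamma> t)) \<gamma>1) (at t)"
proof -
  have "(f \<circ> \<gamma> has_derivative frechet_derivative f (at (\<gamma> t)) \<circ> (\<lambda>h. h *\<^sub>R \<gamma>1)) (at t)"
    using diff_chain_at[OF g[unfolded has_vector_derivative_def] fd[unfolded frechet_derivative_works]] .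
  moreover have "frechet_derivative f (at (\<gamma> t)) \<circ> (\<lambda>h. h *\<^sub>R \<gamma>1) = (*) (frechet_derivative f (at (\<gamma> t)) \<gamma>1)"
    using linear_frechet_derivative[OF fd] by (auto simp: linear_cmul)
  ultimately show ?thesis by (simp add: has_field_derivative_def o_def)
qed

lemma comp_deriv:
  fixes \<gamma> :: "real \<Rightarrow> complex^'i::finite"
  assumes "(\<gamma> has_vector_derivative v) (at t)"
  shows "((\<lambda>t. Re (\<gamma> t $ q)) has_real_derivative Re (v $ q)) (at t)"
    and "((\<lambda>t. Im (\<gamma> t $ q)) has_real_derivative Im (v $ q)) (at t)"
proof -
  have bl1: "bounded_linear (\<lambda>x::complex^'i. Re (x $ q))"
    by (rule bounded_linear_compose[OF bounded_linear_Re bounded_linear_vec_nth])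
  have bl2: "bounded_linear (\<lambda>x::complex^'i. Im (x $ q))"
    by (rule bounded_linear_compose[OF bounded_linear_Im bounded_linear_vec_nth])
  show "((\<lambda>t. Re (\<gamma> t $ q)) has_real_derivative Re (v $ q)) (at t)"
    using bounded_linear.has_derivative[OF bl1 assms[unfolded has_vector_derivative_def]]
    by (simp add: has_field_derivative_def mult_commute_abs)
  show "((\<lambda>t. Im (\<gamma> t $ q)) has_real_derivative Im (v $ q)) (at t)"
    using bounded_linear.has_derivative[OF bl2 assms[unfolded has_vector_derivative_def]]
    by (simp add: has_field_derivative_def mult_commute_abs)
qed

lemma curve2:
  fixes f :: "complex^'i::finite \<Rightarrow> real"
  assumes fd: "\<And>z. z \<in> U \<Longrightarrow> f differentiable (at z)"
    and hd: "\<And>u z. z \<in> U \<Longrightarrow> (\<lambda>z. frechet_derivative f (at z) u) differentiable (at z)"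
    and g: "\<And>t. (\<gamma> has_vector_derivative \<gamma>1 t) (at t)"
    and g1: "(\<gamma>1 has_vector_derivative \<gamma>2) (at t)"
    and inU: "\<And>t. \<gamma> t \<in> U"
  shows "((\<lambda>t. frechet_derivative f (at (\<gamma> t)) (\<gamma>1 t)) has_real_derivative
     (frechet_derivative f (at (\<gamma> t)) \<gamma>2 +
      (\<Sum>q\<in>UNIV. \<Sum>r\<in>UNIV.
          Re (\<gamma>1 t$q) * Re (\<gamma>1 t$r) * dird (axis r 1) (dird (axis q 1) f) (\<gamma> t)
        + Re (\<gamma>1 t$q) * Im (\<gamma>1 t$r) * dird (axis r \<i>) (dird (axis q 1) f) (\<gamma> t)
        + Im (\<gamma>1 t$q) * Re (\<gamma>1 t$r) * dird (axis r 1) (dird (axis q \<i>) f) (\<gamma> t)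
        + Im (\<gamma>1 t$q) * Im (\<gamma>1 t$r) * dird (axis r \<i>) (dird (axis q \<i>) f) (\<gamma> t)))) (at t)"
proof -
  define hX where "hX q = dird (axis q 1) f" for q
  define hY where "hY q = dird (axis q \<i>) f" for q
  have hXd: "hX q differentiable (at z)" "hY q differentiable (at z)" if "z \<in> U" for q z
    using hd[OF that] by (auto simp: hX_def hY_def dird_def[abs_def])
  have feq: "(\<lambda>t. frechet_derivative f (at (\<gamma> t)) (\<gamma>1 t)) =
     (\<lambda>t. \<Sum>q\<in>UNIV. Re (\<gamma>1 t$q) * hX q (\<gamma> t) + Im (\<gamma>1 t$q) * hY q (\<gamma> t))"
  proof (rule ext)
    fix s show "frechet_derivative f (at (\<gamma> s)) (\<gamma>1 s) =
     (\<Sum>q\<in>UNIV. Re (\<gamma>1 s$q) * hX q (\<gamma> s) + Im (\<gamma>1 s$q) * hY q (\<gamma> s))"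
    by (subst lin_expand[OF linear_frechet_derivative[OF fd[OF inU[of s]]]])
       (simp add: hX_def hY_def dird_def)
  qed
  have dX: "((\<lambda>t. hX q (\<gamma> t)) has_real_derivative
      (\<Sum>r\<in>UNIV. Re (\<gamma>1 t$r) * dird (axis r 1) (hX q) (\<gamma> t) + Im (\<gamma>1 t$r) * dird (axis r \<i>) (hX q) (\<gamma> t))) (at t)" for q
    using curve1[OF hXd(1)[OF inU[of t]] g]
      lin_expand[OF linear_frechet_derivative[OF hXd(1)[OF inU[of t]]], where v="\<gamma>1 t"]
    by (simp add: dird_def)
  have dY: "((\<lambda>t. hY q (\<gamma> t)) has_real_derivative
      (\<Sum>r\<in>UNIV. Re (\<gamma>1 t$r) * dird (axis r 1) (hY q) (\<gamma> t) + Im (\<gamma>1 t$r) * dird (axis r \<i>) (hY q) (\<gamma> t))) (at t)" for q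
    using curve1[OF hXd(2)[OF inU[of t]] g]
      lin_expand[OF linear_frechet_derivative[OF hXd(2)[OF inU[of t]]], where v="\<gamma>1 t"]
    by (simp add: dird_def)
  have D: "((\<lambda>t. \<Sum>q\<in>UNIV. Re (\<gamma>1 t$q) * hX q (\<gamma> t) + Im (\<gamma>1 t$q) * hY q (\<gamma> t)) has_real_derivative
     (\<Sum>q\<in>UNIV. (Re (\<gamma>2$q) * hX q (\<gamma> t) + (\<Sum>r\<in>UNIV. Re (\<gamma>1 t$r) * dird (axis r 1) (hX q) (\<gamma> t) + Im (\<gamma>1 t$r) * dird (axis r \<i>) (hX q) (\<gamma> t)) * Re (\<gamma>1 t$q))
          + (Im (\<gamma>2$q) * hY q (\<gamma> t) + (\<Sum>r\<in>UNIV. Re (\<gamma>1 t$r) * dird (axis r 1) (hY q) (\<gamma> t) + Im (\<gamma>1 t$r) * dird (axis r \<i>) (hY q) (\<gamma> t)) * Im (\<gamma>1 t$q)))) (at t)"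
    by (intro DERIV_sum DERIV_add DERIV_mult comp_deriv[OF g1] dX dY)
  have lin2: "frechet_derivative f (at (\<gamma> t)) \<gamma>2 = (\<Sum>q\<in>UNIV. Re (\<gamma>2$q) * hX q (\<gamma> t) + Im (\<gamma>2$q) * hY q (\<gamma> t))"
    by (subst lin_expand[OF linear_frechet_derivative[OF fd[OF inU[of t]]]])
       (simp add: hX_def hY_def dird_def)
  show ?thesis
    unfolding feq
    apply (rule DERIV_cong[OF D])
    apply (simp add: lin2 hX_def hY_def sum.distrib[symmetric] sum_distrib_left algebra_simps)
    done
qed

lemma bl_axis: "bounded_linear (\<lambda>c::complex. (axis q c :: complex^'i::finite))"
proof -
  have "linear (\<lambda>c::complex. (axis q c :: complex^'i))"
    by (rule linearI) (auto simp: axis_def vec_eq_iff)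
  then show ?thesis by (simp add: linear_conv_bounded_linear)
qed

lemma vec_vderiv:
  fixes F :: "real \<Rightarrow> complex^'i::finite"
  assumes "\<And>q. ((\<lambda>s. F s $ q) has_vector_derivative (v $ q)) (at t)"
  shows "(F has_vector_derivative v) (at t)"
proof -
  have e: "G = (\<Sum>q\<in>UNIV. axis q (G $ q))" for G :: "complex^'i"
    by (simp add: vec_eq_iff sum_component axis_def)
  have "((\<lambda>s. \<Sum>q\<in>UNIV. axis q (F s $ q)) has_vector_derivative (\<Sum>q\<in>UNIV. axis q (v $ q))) (at t)"
    by (intro has_vector_derivative_sum bounded_linear.has_vector_derivative[OF bl_axis] assms)
  then show ?thesis using e[of v] e[symmetric] by simp
qed

lemma cis_vd:
  "((\<lambda>\<tau>::real. cis (\<tau> * c) * w) has_vector_derivative (\<i> * of_real c * cis (t * c) * w)) (at t)"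
proof -
  have "((\<lambda>z. exp (\<i> * z * of_real c) * w) has_field_derivative (\<i> * of_real c * exp (\<i> * of_real t * of_real c) * w)) (at (of_real t))"
    by (auto intro!: derivative_eq_intros simp: algebra_simps)
  from has_vector_derivative_real_field[OF this]
  show ?thesis by (simp add: cis_conv_exp mult.assoc)
qed

lemma cis_vd2:
  "((\<lambda>\<tau>::real. a * cis (\<tau> * c) * w) has_vector_derivative (a * (\<i> * of_real c * cis (t * c)) * w)) (at t)"
proof -
  have "((\<lambda>z. a * exp (\<i> * z * of_real c) * w) has_field_derivative (a * (\<i> * of_real c * exp (\<i> * of_real t * of_real c)) * w)) (at (of_real t))"
    by (auto intro!: derivative_eq_intros simp: algebra_simps)
  from has_vector_derivative_real_field[OF this]
  show ?thesis by (simp add: cis_conv_exp mult.assoc)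
qed

lemma exp_vd2:
  "((\<lambda>s::real. complex_of_real (a * exp (s * c) * b)) has_vector_derivative complex_of_real (a * (c * exp (t * c)) * b)) (at t)"
  by (rule has_vector_derivative_of_real) (auto intro!: derivative_eq_intros)

lemma exp_vd:
  "((\<lambda>s::real. complex_of_real (exp (s * c) * b)) has_vector_derivative complex_of_real (c * exp (t * c) * b)) (at t)"
  by (rule has_vector_derivative_of_real) (auto intro!: derivative_eq_intros)

lemma lap:
  fixes f :: "complex^'i::finite \<Rightarrow> real" and \<beta> c :: "'i \<Rightarrow> real"
  assumes fd: "\<And>z. z \<noteq> 0 \<Longrightarrow> f differentiable (at z)"
    and hd: "\<And>u z. z \<noteq> 0 \<Longrightarrow> (\<lambda>z. frechet_derivative f (at z) u) differentiable (at z)"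
    and ph: "\<And>\<theta> z. f (\<chi> q. cis (\<theta> q) * z$q) = f z"
    and nz: "\<And>s. (\<chi> q. complex_of_real (exp (s * c q) * \<beta> q)) \<noteq> 0"
  shows "((\<lambda>s. frechet_derivative f (at (\<chi> q. complex_of_real (exp (s * c q) * \<beta> q)))
                (\<chi> q. complex_of_real (c q * exp (s * c q) * \<beta> q))) has_real_derivative
          (\<Sum>q\<in>UNIV. \<Sum>r\<in>UNIV. (c q * exp (s * c q) * \<beta> q) * (c r * exp (s * c r) * \<beta> r) *
             (dird (axis r 1) (dird (axis q 1) f) (\<chi> q. complex_of_real (exp (s * c q) * \<beta> q))
            + dird (axis r \<i>) (dird (axis q \<i>) f) (\<chi> q. complex_of_real (exp (s * c q) * \<beta> q))))) (at s)"
proof -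
  define W where "W s = (\<chi> q. complex_of_real (exp (s * c q) * \<beta> q))" for s
  define V where "V s = (\<chi> q. complex_of_real (c q * exp (s * c q) * \<beta> q))" for s
  define V2 where "V2 = (\<chi> q. complex_of_real (c q * (c q * exp (s * c q)) * \<beta> q))"
  define w where "w = W s"
  define D where "D a b = dird a (dird b f) w" for a b
  have WV: "(W has_vector_derivative V t) (at t)" for t
    unfolding W_def V_def by (rule vec_vderiv) (simp only: vec_lambda_beta exp_vd)
  have VV: "(V has_vector_derivative V2) (at s)"
    unfolding V_def V2_def
    by (rule vec_vderiv) (simp only: vec_lambda_beta exp_vd2)
  have s1: "((\<lambda>t. frechet_derivative f (at (W t)) (V t)) has_real_derivative
     (frechet_derivative f (at w) V2 + (\<Sum>q\<in>UNIV. \<Sum>r\<in>UNIV.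
          (c q * exp (s * c q) * \<beta> q) * (c r * exp (s * c r) * \<beta> r) * D (axis r 1) (axis q 1)))) (at s)"
    using curve2[where U="UNIV - {0}", OF fd hd WV VV] nz unfolding W_def
    by (simp add: V_def W_def w_def D_def)
  define \<delta> where "\<delta> \<tau> = (\<chi> q. cis (\<tau> * c q) * w $ q)" for \<tau>
  define \<delta>1 where "\<delta>1 \<tau> = (\<chi> q. \<i> * of_real (c q) * cis (\<tau> * c q) * w $ q)" for \<tau>
  define \<delta>2 where "\<delta>2 = (\<chi> q. \<i> * of_real (c q) * (\<i> * of_real (c q) * cis (0 * c q)) * w $ q)"
  have dd: "(\<delta> has_vector_derivative \<delta>1 t) (at t)" for t
    unfolding \<delta>_def \<delta>1_def by (rule vec_vderiv) (simp only: vec_lambda_beta cis_vd)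
  have dd1: "(\<delta>1 has_vector_derivative \<delta>2) (at 0)"
    unfolding \<delta>1_def \<delta>2_def by (rule vec_vderiv) (simp only: vec_lambda_beta cis_vd2)
  have dnz: "\<delta> t \<noteq> 0" for t
  proof
    assume "\<delta> t = 0"
    then have "w = 0" by (simp add: \<delta>_def vec_eq_iff)
    then show False using nz by (simp add: w_def W_def)
  qed
  have const: "f (\<delta> t) = f w" for t
    using ph[of "\<lambda>q. t * c q" w] by (simp add: \<delta>_def)
  have z1: "frechet_derivative f (at (\<delta> t)) (\<delta>1 t) = 0" for t
  proof -
    have "((\<lambda>t. f (\<delta> t)) has_real_derivative frechet_derivative f (at (\<delta> t)) (\<delta>1 t)) (at t)"
      by (rule curve1[OF fd[OF dnz] dd])
    moreover have "((\<lambda>t. f (\<delta> t)) has_real_derivative 0) (at t)"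
      by (simp add: const)
    ultimately show ?thesis by (rule DERIV_unique)
  qed
  have s2: "((\<lambda>t. frechet_derivative f (at (\<delta> t)) (\<delta>1 t)) has_real_derivative
     (frechet_derivative f (at (\<delta> 0)) \<delta>2 +
      (\<Sum>q\<in>UNIV. \<Sum>r\<in>UNIV.
          Re (\<delta>1 0$q) * Re (\<delta>1 0$r) * dird (axis r 1) (dird (axis q 1) f) (\<delta> 0)
        + Re (\<delta>1 0$q) * Im (\<delta>1 0$r) * dird (axis r \<i>) (dird (axis q 1) f) (\<delta> 0)
        + Im (\<delta>1 0$q) * Re (\<delta>1 0$r) * dird (axis r 1) (dird (axis q \<i>) f) (\<delta> 0)
        + Im (\<delta>1 0$q) * Im (\<delta>1 0$r) * dird (axis r \<i>) (dird (axis q \<i>) f) (\<delta> 0)))) (at 0)"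
    by (rule curve2[where U="UNIV - {0}", OF fd hd dd dd1]) (use dnz in auto)
  have d0: "\<delta> 0 = w" by (simp add: \<delta>_def vec_eq_iff)
  have d2: "\<delta>2 = - V2" by (simp add: \<delta>2_def V2_def w_def W_def vec_eq_iff algebra_simps)
  have s2': "0 = - frechet_derivative f (at w) V2 + (\<Sum>q\<in>UNIV. \<Sum>r\<in>UNIV.
          (c q * exp (s * c q) * \<beta> q) * (c r * exp (s * c r) * \<beta> r) * D (axis r \<i>) (axis q \<i>))"
  proof -
    have "((\<lambda>t. frechet_derivative f (at (\<delta> t)) (\<delta>1 t)) has_real_derivative 0) (at 0)"
      by (simp add: z1)
    from DERIV_unique[OF this s2] show ?thesis
      using linear_frechet_derivative[OF fd[OF nz[of s]]]
      by (simp add: d0 d2 real_vector.linear_neg \<delta>1_def w_def W_def D_def mult.assoc)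
  qed
  show ?thesis
    using DERIV_cong[OF s1, of "(\<Sum>q\<in>UNIV. \<Sum>r\<in>UNIV. (c q * exp (s * c q) * \<beta> q) * (c r * exp (s * c r) * \<beta> r) * (D (axis r 1) (axis q 1) + D (axis r \<i>) (axis q \<i>)))"] s2'
    by (simp add: W_def V_def D_def w_def algebra_simps sum.distrib)
qed

lemma logsq_eq: "logsq = (\<lambda>z::complex^'i::finite. ln (z \<bullet> z))"
  by (rule ext) (simp add: logsq_def inner_vec_def power2_norm_eq_inner)

lemma logsq_hasd:
  fixes z :: "complex^'i::finite"
  assumes "z \<noteq> 0"
  shows "(logsq has_derivative (\<lambda>h. (h \<bullet> z + z \<bullet> h) / (z \<bullet> z))) (at z)"
proof -
  have pos: "z \<bullet> z > 0" using assms by simp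
  have 1: "((\<lambda>z. z \<bullet> z) has_derivative (\<lambda>h. h \<bullet> z + z \<bullet> h)) (at z)"
    by (auto intro!: derivative_eq_intros)
  have 2: "(ln has_derivative (\<lambda>h. h * inverse (z \<bullet> z))) (at (z \<bullet> z))"
    using DERIV_ln[OF pos] by (simp add: has_field_derivative_def mult_commute_abs)
  from diff_chain_at[OF 1 2] show ?thesis
    by (simp add: logsq_eq o_def divide_inverse)
qed

lemma logsq_fd: "(z::complex^'i::finite) \<noteq> 0 \<Longrightarrow> logsq differentiable (at z)"
  using logsq_hasd differentiableI by blast

lemma logsq_hd:
  fixes z :: "complex^'i::finite"
  assumes "z \<noteq> 0"
  shows "(\<lambda>z. frechet_derivative logsq (at z) u) differentiable (at z)"
proof -
  have eq: "frechet_derivative logsq (at w) u = (u \<bullet> w + w \<bullet> u) / (w \<bullet> w)" if "w \<in> UNIV - {0}" for w :: "complex^'i"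
  proof -
    from that have "w \<noteq> 0" by auto
    from fun_cong[OF frechet_derivative_at[OF logsq_hasd[OF this]], of u] show ?thesis by simp
  qed
  have "(\<lambda>w. (u \<bullet> w + w \<bullet> u) / (w \<bullet> w)) differentiable (at z)"
    using assms by (auto intro!: derivative_intros)
  then obtain D where "((\<lambda>w. (u \<bullet> w + w \<bullet> u) / (w \<bullet> w)) has_derivative D) (at z)"
    by (auto simp: differentiable_def)
  then have "((\<lambda>z. frechet_derivative logsq (at z) u) has_derivative D) (at z)"
    by (rule has_derivative_transform_within_open[where s="UNIV - {0}"]) (use assms eq in auto)
  then show ?thesis by (auto simp: differentiable_def)
qed

lemma logsq_ph: "logsq (\<chi> q. cis (\<theta> q) * z$q) = logsq (z::complex^'i::finite)"
  by (simp add: logsq_def norm_mult)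

lemma phi_fd:
  assumes "smooth_on (UNIV - {0}) Phi" "z \<noteq> 0"
  shows "Phi differentiable (at z)" "(\<lambda>z. frechet_derivative Phi (at z) u) differentiable (at z)"
proof -
  have o: "open (UNIV - {0::'a})" by auto
  from assms(1) have d: "Phi differentiable_on (UNIV - {0})"
     and s: "smooth_on (UNIV - {0}) (\<lambda>z. frechet_derivative Phi (at z) u)"
    by (auto elim: smooth_on.cases)
  from s have d2: "(\<lambda>z. frechet_derivative Phi (at z) u) differentiable_on (UNIV - {0})"
    by (auto elim: smooth_on.cases)
  show "Phi differentiable (at z)" using d assms(2) o differentiable_on_eq_differentiable_at by blast
  show "(\<lambda>z. frechet_derivative Phi (at z) u) differentiable (at z)"
    using d2 assms(2) o differentiable_on_eq_differentiable_at by blast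
qed

lemma inv_facts:
  assumes "bij_betw idx {..<N} (UNIV::'i set)"
  shows "the_inv_into {..<N} idx q < N" "idx (the_inv_into {..<N} idx q) = q"
    "p < N \<Longrightarrow> the_inv_into {..<N} idx (idx p) = p"
proof -
  have "the_inv_into {..<N} idx q \<in> {..<N}"
    by (rule the_inv_into_into) (use assms in \<open>auto simp: bij_betw_def\<close>)
  then show "the_inv_into {..<N} idx q < N" by simp
  show "idx (the_inv_into {..<N} idx q) = q" "p < N \<Longrightarrow> the_inv_into {..<N} idx (idx p) = p"
    using assms by (auto simp: bij_betw_def the_inv_into_f_f f_the_inv_into_f)
qed

lemma perm_mk:
  assumes "bij_betw idx {..<N} (UNIV::'i::finite set)" "\<And>p. p < N \<Longrightarrow> \<sigma> p < N"
  shows "perm_pt idx N \<sigma> (mk_point idx N h :: complex^'i) = mk_point idx N (h \<circ> \<sigma>)"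
  using inv_facts[OF assms(1)] assms(2)
  by (simp add: vec_eq_iff perm_pt_def mk_point_def coord_def)

lemma mk_cong:
  assumes "bij_betw idx {..<N} (UNIV::'i::finite set)" "\<And>p. p < N \<Longrightarrow> h p = h' p"
  shows "(mk_point idx N h :: complex^'i) = mk_point idx N h'"
  using inv_facts[OF assms(1)] assms(2)
  by (simp add: vec_eq_iff mk_point_def)

lemma bs_props:
  assumes n: "n \<ge> 1" and i: "i < k" and j: "j < k" and p: "p < k*n"
  shows "block_swap n i j p < k*n" "block_swap n i j (block_swap n i j p) = p"
proof -
  have np: "n > 0" using n by simp
  have lt: "x * n + p mod n < k * n" if "x < k" for x
  proof -
    have "x * n + p mod n < x * n + n" using np by simp
    also have "\<dots> = (x+1) * n" by simp
    also have "\<dots> \<le> k * n" using that by (intro mult_right_mono) auto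
    finally show ?thesis .
  qed
  have dv: "(x * n + p mod n) div n = x" for x using np by simp
  have md: "(x * n + p mod n) mod n = p mod n" for x using np by simp
  show "block_swap n i j p < k*n" using lt i j p by (simp add: block_swap_def)
  show "block_swap n i j (block_swap n i j p) = p"
    using dv md np by (auto simp: block_swap_def)
qed

lemma logsq_perm:
  assumes idx: "bij_betw idx {..<N} (UNIV::'i::finite set)" and s: "bij_betw \<sigma> {..<N} {..<N}"
  shows "logsq (perm_pt idx N \<sigma> z) = logsq (z :: complex^'i)"
proof -
  let ?i = "the_inv_into {..<N} idx"
  have bi: "bij_betw ?i UNIV {..<N}"
    using idx by (simp add: bij_betw_the_inv_into)
  have "(\<Sum>q\<in>UNIV. (cmod (z $ idx (\<sigma> (?i q))))\<^sup>2) = (\<Sum>p\<in>{..<N}. (cmod (z $ idx (\<sigma> p)))\<^sup>2)"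
    by (rule sum.reindex_bij_betw[OF bi, of "\<lambda>p. (cmod (z $ idx (\<sigma> p)))\<^sup>2"])
  also have "\<dots> = (\<Sum>p\<in>{..<N}. (cmod (z $ idx p))\<^sup>2)"
    by (rule sum.reindex_bij_betw[OF s, of "\<lambda>p. (cmod (z $ idx p))\<^sup>2"])
  also have "\<dots> = (\<Sum>q\<in>UNIV. (cmod (z $ q))\<^sup>2)"
    by (rule sum.reindex_bij_betw[OF idx])
  finally show ?thesis
    by (simp add: logsq_def perm_pt_def mk_point_def coord_def)
qed

lemma phase_all:
  assumes idx: "bij_betw idx {..<N} (UNIV::'i::finite set)"
    and inv: "\<And>p \<theta> z. p < N \<Longrightarrow> Phi (phase_pt idx p \<theta> z) = Phi z"
  shows "Phi (\<chi> q. cis (\<theta> q) * z$q) = Phi (z :: complex^'i)"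
proof -
  have "finite S \<Longrightarrow> Phi (\<chi> q. if q \<in> S then cis (\<theta> q) * z$q else z$q) = Phi z" for S
  proof (induction S rule: finite_induct)
    case empty then show ?case by simp
  next
    case (insert x S)
    let ?p = "the_inv_into {..<N} idx x"
    have "(\<chi> q. if q \<in> insert x S then cis (\<theta> q) * z$q else z$q)
        = phase_pt idx ?p (\<theta> x) (\<chi> q. if q \<in> S then cis (\<theta> q) * z$q else z$q)"
      using insert(2) inv_facts[OF idx] by (auto simp: vec_eq_iff phase_pt_def)
    then show ?case using inv[of ?p] inv_facts[OF idx] insert(3) by simp
  qed
  from this[of UNIV] show ?thesis by simp
qed

definition Kf :: "(complex^'i \<Rightarrow> real) \<Rightarrow> complex^'i \<Rightarrow> 'i \<Rightarrow> 'i \<Rightarrow> real" where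
  "Kf f z l m = dird (axis l 1) (dird (axis m 1) f) z + dird (axis l \<i>) (dird (axis m \<i>) f) z"

lemma re_wirt2: "Re (wirt2 f l m z) = Kf f z l m / 4"
  by (simp add: wirt2_def Let_def Kf_def)

lemma sum_remove0:
  fixes G :: "nat \<Rightarrow> real"
  assumes "0 < N" "G 0 = 0"
  shows "(\<Sum>l\<in>{..<N} - {0}. G l) = (\<Sum>l<N. G l)"
  using sum.remove[of "{..<N}" 0 G] assms by simp

lemma posQ:
  fixes Phi :: "complex^'i::finite \<Rightarrow> real" and \<rho> :: "'i \<Rightarrow> real"
  assumes idx: "bij_betw idx {..<N} (UNIV::'i set)" and N: "0 < N"
    and adm: "admissible a idx N Phi" and z0: "z $ idx 0 = 1" and r0: "\<rho> (idx 0) = 0"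
  shows "0 \<le> (\<Sum>r\<in>UNIV. \<Sum>q\<in>UNIV. \<rho> r * \<rho> q * (Kf Phi z r q + a * Kf logsq z r q))"
proof -
  define H where "H l m = complex_of_real a * wirt2 logsq (idx l) (idx m) z + wirt2 Phi (idx l) (idx m) z" for l m
  define v where "v l = complex_of_real (\<rho> (idx l))" for l
  define I where "I = {..<N} - {0::nat}"
  define T where "T r q = \<rho> r * \<rho> q * (Kf Phi z r q + a * Kf logsq z r q)" for r q
  have pd: "pos_def_herm I H"
    using adm N z0 unfolding admissible_def H_def[abs_def] I_def by simp
  have re: "Re (H l m * v l * cnj (v m)) = T (idx l) (idx m) / 4" for l m
  proof -
    have "Re (H l m * v l * cnj (v m)) = Re (H l m) * \<rho> (idx l) * \<rho> (idx m)"
      by (simp add: v_def)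
    also have "Re (H l m) = a * (Kf logsq z (idx l) (idx m) / 4) + Kf Phi z (idx l) (idx m) / 4"
      by (simp add: H_def re_wirt2)
    finally show ?thesis by (simp add: T_def field_simps)
  qed
  have nn: "0 \<le> Re (\<Sum>l\<in>I. \<Sum>m\<in>I. H l m * v l * cnj (v m))"
  proof (cases "\<exists>l\<in>I. v l \<noteq> 0")
    case True
    from pd have "\<forall>v. (\<exists>l\<in>I. v l \<noteq> 0) \<longrightarrow> 0 < Re (\<Sum>l\<in>I. \<Sum>m\<in>I. H l m * v l * cnj (v m))"
      unfolding pos_def_herm_def by blast
    with True show ?thesis by (meson less_imp_le)
  next
    case False then show ?thesis by simp
  qed
  have "Re (\<Sum>l\<in>I. \<Sum>m\<in>I. H l m * v l * cnj (v m)) = (\<Sum>l\<in>I. \<Sum>m\<in>I. T (idx l) (idx m) / 4)"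
    by (simp only: Re_sum re)
  also have "\<dots> = (\<Sum>l<N. \<Sum>m<N. T (idx l) (idx m) / 4)"
  proof -
    have "(\<Sum>l\<in>I. \<Sum>m\<in>I. T (idx l) (idx m) / 4) = (\<Sum>l\<in>I. \<Sum>m<N. T (idx l) (idx m) / 4)"
      unfolding I_def by (rule sum.cong[OF refl], rule sum_remove0[OF N]) (simp add: T_def r0)
    also have "\<dots> = (\<Sum>l<N. \<Sum>m<N. T (idx l) (idx m) / 4)"
      unfolding I_def by (rule sum_remove0[OF N]) (simp add: T_def r0)
    finally show ?thesis .
  qed
  also have "\<dots> = (\<Sum>l<N. \<Sum>q\<in>UNIV. T (idx l) q / 4)"
    by (rule sum.cong[OF refl], rule sum.reindex_bij_betw[OF idx])
  also have "\<dots> = (\<Sum>r\<in>UNIV. \<Sum>q\<in>UNIV. T r q / 4)"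
    by (rule sum.reindex_bij_betw[OF idx, of "\<lambda>r. \<Sum>q\<in>UNIV. T r q / 4"])
  finally have "0 \<le> (\<Sum>r\<in>UNIV. \<Sum>q\<in>UNIV. T r q / 4)" using nn by simp
  then show ?thesis by (simp add: T_def sum_divide_distrib[symmetric])
qed

lemma grad0:
  fixes f :: "complex^'i::finite \<Rightarrow> real" and \<beta> c :: "'i \<Rightarrow> real" and E :: "nat \<Rightarrow> 'i \<Rightarrow> real"
  assumes fd: "\<And>z. z \<noteq> 0 \<Longrightarrow> f differentiable (at z)"
    and nz: "(\<chi> q. complex_of_real (\<beta> q)) \<noteq> 0"
    and symm: "\<And>i s. i \<in> A \<Longrightarrow> f (\<chi> q. complex_of_real (exp (s * E i q) * \<beta> q))
                                 = f (\<chi> q. complex_of_real (exp (s * E i0 q) * \<beta> q))"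
    and i0: "i0 \<in> A" and fin: "finite A"
    and cdec: "\<And>q. c q = (\<Sum>i\<in>A. d i * E i q)"
    and dsum: "(\<Sum>i\<in>A. d i) = 0"
  shows "frechet_derivative f (at (\<chi> q. complex_of_real (\<beta> q))) (\<chi> q. complex_of_real (c q * \<beta> q)) = 0"
proof -
  define P where "P = (\<chi> q. complex_of_real (\<beta> q))"
  define u where "u i = (\<chi> q. complex_of_real (E i q * \<beta> q))" for i
  define L where "L = frechet_derivative f (at P)"
  have lin: "linear L" unfolding L_def by (rule linear_frechet_derivative[OF fd]) (simp add: P_def nz)
  have der: "((\<lambda>s. f (\<chi> q. complex_of_real (exp (s * E i q) * \<beta> q))) has_real_derivative L (u i)) (at 0)" for i
  proof -
    have vd: "((\<lambda>s. \<chi> q. complex_of_real (exp (s * E i q) * \<beta> q)) has_vector_derivative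
               (\<chi> q. complex_of_real (E i q * exp (0 * E i q) * \<beta> q))) (at 0)"
      by (rule vec_vderiv) (simp only: vec_lambda_beta exp_vd)
    have "((\<lambda>s. f (\<chi> q. complex_of_real (exp (s * E i q) * \<beta> q))) has_real_derivative
           frechet_derivative f (at (\<chi> q. complex_of_real (exp (0 * E i q) * \<beta> q)))
             (\<chi> q. complex_of_real (E i q * exp (0 * E i q) * \<beta> q))) (at 0)"
      by (rule curve1[OF _ vd]) (use fd nz in simp)
    then show ?thesis by (simp add: L_def P_def u_def)
  qed
  have equ: "L (u i) = L (u i0)" if "i \<in> A" for i
  proof -
    have "((\<lambda>s. f (\<chi> q. complex_of_real (exp (s * E i q) * \<beta> q))) has_real_derivative L (u i0)) (at 0)"
    proof -
      have feq: "(\<lambda>s. f (\<chi> q. complex_of_real (exp (s * E i q) * \<beta> q)))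
               = (\<lambda>s. f (\<chi> q. complex_of_real (exp (s * E i0 q) * \<beta> q)))"
        by (rule ext) (rule symm[OF that])
      show ?thesis unfolding feq by (rule der)
    qed
    from DERIV_unique[OF der[of i] this] show ?thesis .
  qed
  have ve: "(\<chi> q. complex_of_real (c q * \<beta> q)) = (\<Sum>i\<in>A. d i *\<^sub>R u i)"
    unfolding vec_eq_iff sum_component u_def vector_scaleR_component vec_lambda_beta
    by (simp add: cdec sum_distrib_right scaleR_conv_of_real mult.assoc)
  have "L (\<chi> q. complex_of_real (c q * \<beta> q)) = (\<Sum>i\<in>A. d i * L (u i))"
    unfolding ve using lin by (simp add: real_vector.linear_sum linear_cmul)
  also have "\<dots> = (\<Sum>i\<in>A. d i) * L (u i0)"
    by (simp add: equ sum_distrib_right)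
  finally show ?thesis by (simp add: dsum L_def P_def)
qed

lemma bs_facts:
  assumes n: "n \<ge> 1" and i1: "1 \<le> i" and ik: "i < k"
  shows "(block_swap n 1 i p div n = i) = (p div n = 1)"
    "(block_swap n 1 i p = 0) = (p = 0)"
    "(block_swap n 1 i p < n) = (p < n)"
proof -
  have np: "n > 0" using n by simp
  have dv: "(x * n + p mod n) div n = x" for x using np by simp
  have ge: "x * n + p mod n \<ge> n" if "x \<ge> 1" for x
  proof -
    from that obtain y where "x = Suc y" by (cases x) auto
    then show ?thesis by simp
  qed
  have p1: "p \<ge> n" if "p div n = 1"
  proof (rule ccontr)
    assume "\<not> n \<le> p" then have "p div n = 0" by simp
    with that show False by simp
  qed
  have pi: "p \<ge> n" if "p div n = i"
  proof (rule ccontr)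
    assume "\<not> n \<le> p" then have "p div n = 0" by simp
    with that i1 show False by simp
  qed
  have dv1: "(n + p mod n) div n = 1" using dv[of 1] by simp
  show "(block_swap n 1 i p div n = i) = (p div n = 1)"
    using dv[of i] dv1 by (auto simp: block_swap_def)
  show "(block_swap n 1 i p = 0) = (p = 0)"
    using ge[of i] ge[of 1] i1 np p1 pi by (auto simp: block_swap_def)
  show "(block_swap n 1 i p < n) = (p < n)"
    using ge[of i] ge[of 1] i1 np p1 pi by (auto simp: block_swap_def)
qed

lemma card_block:
  assumes n: "n > 0" and ik: "i < k"
  shows "(\<Sum>p<k*n. (if p div n = i then 1 else 0::real)) = real n"
proof -
  have "{p \<in> {..<k*n}. p div n = i} = {i*n..<i*n+n}"
  proof (intro set_eqI iffI)
    fix p assume "p \<in> {p \<in> {..<k*n}. p div n = i}"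
    then have "p div n = i" by simp
    then have eq: "p = i*n + p mod n" using div_mult_mod_eq[of p n] by simp
    have r: "p mod n < n" using n by simp
    show "p \<in> {i*n..<i*n+n}" unfolding atLeastLessThan_iff using eq r by linarith
  next
    fix p assume a: "p \<in> {i*n..<i*n+n}"
    then have "p div n = i" by (intro div_nat_eqI) (auto simp: mult.commute)
    moreover have "p < k * n"
    proof -
      have "p < (i+1)*n" using a by simp
      also have "\<dots> \<le> k * n" using ik by (intro mult_right_mono) auto
      finally show ?thesis .
    qed
    ultimately show "p \<in> {p \<in> {..<k*n}. p div n = i}" by simp
  qed
  then have c: "card {p \<in> {..<k*n}. p div n = i} = n" by simp
  have e: "{..<k*n} \<inter> {p. p div n = i} = {p \<in> {..<k*n}. p div n = i}" by auto
  show ?thesis by (simp only: sum.If_cases[OF finite_lessThan] e) (use c in simp)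
qed

lemma swap_lemma:
  fixes x :: "'a \<Rightarrow> real"
  shows "(\<Sum>q\<in>A. \<Sum>r\<in>B. x q * x r * P r q) + a * (\<Sum>q\<in>A. \<Sum>r\<in>B. x q * x r * L r q)
       = (\<Sum>r\<in>B. \<Sum>q\<in>A. x r * x q * (P r q + a * L r q))"
  by (simp add: sum.swap[of _ A B] sum.distrib sum_distrib_left algebra_simps)

theorem lemma2:
  fixes k n :: nat and a :: real and idx :: "nat \<Rightarrow> 'i::finite"
    and Phi :: "complex^'i \<Rightarrow> real" and \<zeta> :: "nat \<Rightarrow> real"
  assumes k2: "k \<ge> 2" and n1: "n \<ge> 1" and apos: "a > 0"
    and idx: "bij_betw idx {..<k*n} UNIV"
    and proj: "\<And>c z. c \<noteq> 0 \<Longrightarrow> Phi (\<chi> q. c * z $ q) = Phi z"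
    and smooth: "smooth_on (UNIV - {0}) Phi"
    and adm: "admissible a idx (k*n) Phi"
    and inv_block: "\<And>i j z. i < k \<Longrightarrow> j < k \<Longrightarrow> Phi (perm_pt idx (k*n) (block_swap n i j) z) = Phi z"
    and inv_phase: "\<And>p \<theta> z. p < k*n \<Longrightarrow> Phi (phase_pt idx p \<theta> z) = Phi z"
    and inv_transp: "\<And>p q z. p < k*n \<Longrightarrow> q < k*n \<Longrightarrow> p div n = q div n \<Longrightarrow>
                       Phi (perm_pt idx (k*n) (swap_idx p q) z) = Phi z"
    and zeta: "\<And>i. i < k \<Longrightarrow> 0 < \<zeta> i \<and> \<zeta> i \<le> 1"
  shows "(let \<gamma> = (\<Prod>i\<in>{1..<k}. \<zeta> i) powr (1 / real (k - 1));
              P1 = mk_point idx (k*n) (\<lambda>p. if p = 0 then 1 else if p < n then complex_of_real (\<zeta> 0)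
                                            else complex_of_real (\<zeta> (p div n)));
              P2 = mk_point idx (k*n) (\<lambda>p. if p = 0 then 1 else if p < n then complex_of_real (\<zeta> 0)
                                            else complex_of_real \<gamma>)
          in Phi P1 - psi a P1 \<ge> Phi P2 - psi a P2)"
proof -
  define N where "N = k*n"
  define \<iota> where "\<iota> = the_inv_into {..<N} idx"
  define \<gamma> where "\<gamma> = (\<Prod>i\<in>{1..<k}. \<zeta> i) powr (1 / real (k - 1))"
  define bb where "bb p = (if p = 0 then 1 else if p < n then \<zeta> 0 else \<gamma>)" for p
  define dd where "dd i = ln (\<zeta> i) - ln \<gamma>" for i
  define cc where "cc p = (if p < n then 0 else dd (p div n))" for p
  define \<beta> where "\<beta> q = bb (\<iota> q)" for q
  define c where "c q = cc (\<iota> q)" for q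
  define E where "E i q = (if \<iota> q div n = i then 1 else 0::real)" for i q
  define W where "W s = (\<chi> q. complex_of_real (exp (s * c q) * \<beta> q))" for s
  define V where "V s = (\<chi> q. complex_of_real (c q * exp (s * c q) * \<beta> q))" for s
  define F where "F z = Phi z + a * logsq z" for z
  have idxN: "bij_betw idx {..<N} UNIV" using idx N_def by simp
  note iv = inv_facts[OF idxN, folded \<iota>_def]
  have N0: "0 < N" using k2 n1 N_def by simp
  have npos: "0 < n" using n1 by simp
  have zpos: "\<And>i. i < k \<Longrightarrow> \<zeta> i > 0" using zeta by auto
  have ppos: "(\<Prod>i\<in>{1..<k}. \<zeta> i) > 0" by (rule prod_pos) (use zpos in auto)
  have gpos: "\<gamma> > 0"
    unfolding \<gamma>_def powr_gt_zero using ppos by linarith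
  have bpos: "bb p > 0" for p using zpos[of 0] k2 gpos by (simp add: bb_def)
  have lng: "ln \<gamma> = (\<Sum>i\<in>{1..<k}. ln (\<zeta> i)) / real (k-1)"
  proof -
    from ppos have "ln \<gamma> = (1 / real (k - 1)) * ln (\<Prod>i\<in>{1..<k}. \<zeta> i)"
      unfolding \<gamma>_def by (simp add: ln_powr)
    also have "ln (\<Prod>i\<in>{1..<k}. \<zeta> i) = (\<Sum>i\<in>{1..<k}. ln (\<zeta> i))"
    proof (rule ln_prod)
      fix i assume "i \<in> {1..<k}"
      then have "\<zeta> i > 0" using zpos by simp
      then show "\<zeta> i \<noteq> 0" by simp
    qed simp
    finally show ?thesis by simp
  qed
  have dsum: "(\<Sum>i\<in>{1..<k}. dd i) = 0"
  proof -
    have "(\<Sum>i\<in>{1..<k}. dd i) = (\<Sum>i\<in>{1..<k}. ln (\<zeta> i)) - real (k-1) * ln \<gamma>"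
      by (simp add: dd_def sum_subtractf)
    also have "\<dots> = 0" using k2 by (simp add: lng)
    finally show ?thesis .
  qed
  have c0: "c (idx 0) = 0" and b0: "\<beta> (idx 0) = 1"
    using iv(3)[OF N0] by (simp_all add: c_def cc_def npos \<beta>_def bb_def)
  have W0i: "W s $ idx 0 = 1" for s by (simp add: W_def c0 b0)
  have Wnz: "W s \<noteq> 0" for s
  proof
    assume "W s = 0" then have "W s $ idx 0 = 0" by simp
    then show False using W0i by simp
  qed
  have mkp: "mk_point idx N h = (\<chi> q. h (\<iota> q))" for h :: "nat \<Rightarrow> complex"
    by (simp add: mk_point_def \<iota>_def)
  have key: "exp (cc p) * bb p = (if p = 0 then 1 else if p < n then \<zeta> 0 else \<zeta> (p div n))" if "p < N" for p
  proof (cases "p < n")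
    case True then show ?thesis by (simp add: cc_def bb_def)
  next
    case False
    have "p div n < k" using that N_def by (simp add: less_mult_imp_div_less)
    then have zp: "\<zeta> (p div n) > 0" by (rule zpos)
    have "exp (dd (p div n)) * \<gamma> = \<zeta> (p div n)"
      using zp gpos by (simp add: dd_def exp_diff)
    then show ?thesis using False npos by (simp add: cc_def bb_def)
  qed
  define P1 where "P1 = mk_point idx N (\<lambda>p. if p = 0 then 1 else if p < n then complex_of_real (\<zeta> 0)
                                            else complex_of_real (\<zeta> (p div n)))"
  define P2 where "P2 = mk_point idx N (\<lambda>p. if p = 0 then 1 else if p < n then complex_of_real (\<zeta> 0)
                                            else complex_of_real \<gamma>)"
  have W1: "W 1 = P1"
  proof -
    have "complex_of_real (exp (c q) * \<beta> q) = (if \<iota> q = 0 then 1 else if \<iota> q < n then complex_of_real (\<zeta> 0)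
                                            else complex_of_real (\<zeta> (\<iota> q div n)))" for q
      using key[OF iv(1)[of q]] by (simp add: c_def \<beta>_def)
    then show ?thesis by (simp add: W_def P1_def mkp vec_eq_iff)
  qed
  have W0: "W 0 = P2"
    by (simp add: W_def P2_def mkp vec_eq_iff \<beta>_def bb_def)
  have Pfd: "\<And>z. z \<noteq> 0 \<Longrightarrow> Phi differentiable (at z)" using phi_fd(1)[OF smooth] .
  have Phd: "\<And>u z. z \<noteq> 0 \<Longrightarrow> (\<lambda>z. frechet_derivative Phi (at z) u) differentiable (at z)"
    using phi_fd(2)[OF smooth] .
  have Pph: "\<And>\<theta> z. Phi (\<chi> q. cis (\<theta> q) * z$q) = Phi z"
    by (rule phase_all[OF idxN]) (use inv_phase N_def in auto)
  have Wnz': "\<And>s. (\<chi> q. complex_of_real (exp (s * c q) * \<beta> q)) \<noteq> 0" using Wnz by (simp add: W_def)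
  note lapP = lap[OF Pfd Phd Pph Wnz', folded W_def V_def]
  note lapL = lap[OF logsq_fd logsq_hd logsq_ph Wnz', folded W_def V_def]
  have WV: "(W has_vector_derivative V s) (at s)" for s
    unfolding W_def V_def by (rule vec_vderiv) (simp only: vec_lambda_beta exp_vd)
  define g1 where "g1 s = frechet_derivative Phi (at (W s)) (V s) + a * frechet_derivative logsq (at (W s)) (V s)" for s
  have gd: "((\<lambda>s. F (W s)) has_real_derivative g1 s) (at s)" for s
    unfolding F_def g1_def
    by (intro DERIV_add DERIV_cmult curve1[OF _ WV]) (use Pfd logsq_fd Wnz in auto)
  define \<rho> where "\<rho> s q = c q * exp (s * c q) * \<beta> q" for s q
  define G2 where "G2 s = (\<Sum>r\<in>UNIV. \<Sum>q\<in>UNIV. \<rho> s r * \<rho> s q * (Kf Phi (W s) r q + a * Kf logsq (W s) r q))" for s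
  have g1d: "(g1 has_real_derivative G2 s) (at s)" for s
  proof -
    have "((\<lambda>s. g1 s) has_real_derivative
       (\<Sum>q\<in>UNIV. \<Sum>r\<in>UNIV. \<rho> s q * \<rho> s r * Kf Phi (W s) r q) + a * (\<Sum>q\<in>UNIV. \<Sum>r\<in>UNIV. \<rho> s q * \<rho> s r * Kf logsq (W s) r q)) (at s)"
      unfolding g1_def using DERIV_add[OF lapP DERIV_cmult[OF lapL]]
      by (simp add: \<rho>_def Kf_def)
    then show ?thesis unfolding G2_def swap_lemma .
  qed
  have G2nn: "0 \<le> G2 s" for s
    unfolding G2_def
    by (rule posQ[OF idxN N0]) (use adm N_def W0i c0 in \<open>auto simp: \<rho>_def\<close>)
  have cdec: "c q = (\<Sum>i\<in>{1..<k}. dd i * E i q)" for q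
  proof (cases "\<iota> q < n")
    case True
    then have "\<iota> q div n = 0" by simp
    then show ?thesis using True by (simp add: c_def cc_def E_def)
  next
    case False
    have "\<iota> q div n < k" using iv(1)[of q] N_def by (simp add: less_mult_imp_div_less)
    moreover have "\<iota> q div n \<ge> 1" using False npos div_le_mono[of n "\<iota> q" n] by simp
    ultimately have m: "\<iota> q div n \<in> {1..<k}" by simp
    have "(\<Sum>i\<in>{1..<k}. dd i * E i q) = (\<Sum>i\<in>{1..<k}. if \<iota> q div n = i then dd i else 0)"
      by (rule sum.cong) (auto simp: E_def)
    also have "\<dots> = dd (\<iota> q div n)" using m by (simp add: sum.delta)
    finally show ?thesis using False by (simp add: c_def cc_def)
  qed
  have symm: "f (\<chi> q. complex_of_real (exp (s * E i q) * \<beta> q)) = f (\<chi> q. complex_of_real (exp (s * E 1 q) * \<beta> q))"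
    if i: "i \<in> {1..<k}" and finv: "\<And>z. f (perm_pt idx N (block_swap n 1 i) z) = f z" for f :: "complex^'i \<Rightarrow> real" and i s
  proof -
    define h where "h j p = complex_of_real (exp (s * (if p div n = j then 1 else 0)) * bb p)" for j p
    have e: "(\<chi> q. complex_of_real (exp (s * E j q) * \<beta> q)) = mk_point idx N (h j)" for j
      by (simp add: mkp E_def \<beta>_def h_def)
    have i1: "1 \<le> i" "i < k" using i by auto
    have into: "block_swap n 1 i p < N" if "p < N" for p
      using bs_props(1)[OF n1 _ i1(2), of 1 p] that k2 N_def by simp
    have "perm_pt idx N (block_swap n 1 i) (mk_point idx N (h i)) = mk_point idx N (h i \<circ> block_swap n 1 i)"
      by (rule perm_mk[OF idxN into])
    also have "\<dots> = mk_point idx N (h 1)"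
    proof (rule mk_cong[OF idxN])
      fix p assume "p < N"
      note bf = bs_facts[OF n1 i1(1) i1(2), of p]
      show "(h i \<circ> block_swap n 1 i) p = h 1 p"
        unfolding o_def h_def bb_def bf(1)[symmetric] bf(2)[symmetric] bf(3)[symmetric] by simp
    qed
    finally have "perm_pt idx N (block_swap n 1 i) (mk_point idx N (h i)) = mk_point idx N (h 1)" .
    then show ?thesis unfolding e using finv[of "mk_point idx N (h i)"] by simp
  qed
  have bijs: "bij_betw (block_swap n 1 i) {..<N} {..<N}" if "i \<in> {1..<k}" for i
  proof (rule bij_betw_byWitness[where f'="block_swap n 1 i"])
    have i1: "i < k" "1 < k" using that k2 by auto
    show "\<forall>a\<in>{..<N}. block_swap n 1 i (block_swap n 1 i a) = a"
      using bs_props(2)[OF n1 i1(2) i1(1)] N_def by auto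
    show "\<forall>a\<in>{..<N}. block_swap n 1 i (block_swap n 1 i a) = a"
      using bs_props(2)[OF n1 i1(2) i1(1)] N_def by auto
    show "block_swap n 1 i ` {..<N} \<subseteq> {..<N}"
      using bs_props(1)[OF n1 i1(2) i1(1)] N_def by auto
    show "block_swap n 1 i ` {..<N} \<subseteq> {..<N}"
      using bs_props(1)[OF n1 i1(2) i1(1)] N_def by auto
  qed
  have bnz: "(\<chi> q. complex_of_real (\<beta> q)) \<noteq> 0" using Wnz[of 0] by (simp add: W_def)
  have gP: "frechet_derivative Phi (at (\<chi> q. complex_of_real (\<beta> q))) (\<chi> q. complex_of_real (c q * \<beta> q)) = 0"
  proof (rule grad0[OF Pfd bnz _ _ _ cdec dsum])
    show "Phi (\<chi> q. complex_of_real (exp (s * E i q) * \<beta> q)) = Phi (\<chi> q. complex_of_real (exp (s * E 1 q) * \<beta> q))"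
      if "i \<in> {1..<k}" for i s
      by (rule symm[OF that]) (use that k2 inv_block N_def in auto)
  qed (use k2 in auto)
  have gL: "frechet_derivative logsq (at (\<chi> q. complex_of_real (\<beta> q))) (\<chi> q. complex_of_real (c q * \<beta> q)) = 0"
  proof (rule grad0[OF logsq_fd bnz _ _ _ cdec dsum])
    show "logsq (\<chi> q. complex_of_real (exp (s * E i q) * \<beta> q)) = logsq (\<chi> q. complex_of_real (exp (s * E 1 q) * \<beta> q))"
      if "i \<in> {1..<k}" for i s
      by (rule symm[OF that]) (use logsq_perm[OF idxN bijs[OF that]] in auto)
  qed (use k2 in auto)
  have g10: "g1 0 = 0"
    using gP gL by (simp add: g1_def W_def V_def)
  have g1nn: "0 \<le> g1 s" if "0 \<le> s" for s
  proof -
    have "g1 0 \<le> g1 s"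
      by (rule DERIV_nonneg_imp_nondecreasing[OF that]) (use g1d G2nn in blast)
    then show ?thesis using g10 by simp
  qed
  have Fmono: "F (W 0) \<le> F (W 1)"
    by (rule DERIV_nonneg_imp_nondecreasing[where f="\<lambda>s. F (W s)"]) (use gd g1nn in auto)
  have cardI: "CARD('i) = N" using bij_betw_same_card[OF idxN] by simp
  have bi: "bij_betw \<iota> UNIV {..<N}" using idxN by (simp add: \<iota>_def bij_betw_the_inv_into)
  have sumE: "(\<Sum>q\<in>UNIV. E i q) = real n" if "i \<in> {1..<k}" for i
  proof -
    have "(\<Sum>q\<in>UNIV. E i q) = (\<Sum>p<N. (if p div n = i then 1 else 0::real))"
      unfolding E_def by (rule sum.reindex_bij_betw[OF bi, of "\<lambda>p. (if p div n = i then 1 else 0::real)"])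
    also have "\<dots> = real n" unfolding N_def by (rule card_block) (use npos that in auto)
    finally show ?thesis .
  qed
  have sumc: "(\<Sum>q\<in>UNIV. c q) = 0"
  proof -
    have "(\<Sum>q\<in>UNIV. c q) = (\<Sum>i\<in>{1..<k}. dd i * (\<Sum>q\<in>UNIV. E i q))"
      unfolding cdec sum_distrib_left by (rule sum.swap)
    also have "\<dots> = (\<Sum>i\<in>{1..<k}. dd i) * real n"
      by (simp add: sumE sum_distrib_right)
    finally show ?thesis using dsum by simp
  qed
  have betapos: "\<beta> q > 0" for q by (simp add: \<beta>_def bpos)
  have prodW: "(\<Prod>q\<in>UNIV. cmod (W s $ q)) = (\<Prod>q\<in>UNIV. \<beta> q)" for s
  proof -
    have "(\<Prod>q\<in>UNIV. cmod (W s $ q)) = (\<Prod>q\<in>UNIV. exp (s * c q) * \<beta> q)"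
    proof (rule prod.cong[OF refl])
      fix q
      have "0 < exp (s * c q) * \<beta> q" using betapos[of q] by simp
      then show "cmod (W s $ q) = exp (s * c q) * \<beta> q"
        unfolding W_def vec_lambda_beta norm_of_real by simp
    qed
    also have "\<dots> = exp (\<Sum>q\<in>UNIV. s * c q) * (\<Prod>q\<in>UNIV. \<beta> q)"
      by (simp add: prod.distrib exp_sum)
    also have "(\<Sum>q\<in>UNIV. s * c q) = 0" by (simp add: sum_distrib_left[symmetric] sumc)
    finally show ?thesis by simp
  qed
  have pbpos: "(\<Prod>q\<in>UNIV. \<beta> q) > 0" by (rule prod_pos) (use betapos less_imp_le in auto)
  have psiW: "psi a (W s) = (2 * a / real N) * ln (\<Prod>q\<in>UNIV. \<beta> q) - a * logsq (W s)" for s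
  proof -
    have Bpos: "(\<Sum>q\<in>UNIV. (cmod (W s $ q))\<^sup>2) > 0"
    proof -
      have "(\<Sum>q\<in>UNIV. (cmod (W s $ q))\<^sup>2) = W s \<bullet> W s"
        by (simp add: inner_vec_def power2_norm_eq_inner)
      then show ?thesis using Wnz[of s] by simp
    qed
    define A where "A = (\<Prod>q\<in>UNIV. \<beta> q)"
    define B where "B = (\<Sum>q\<in>UNIV. (cmod (W s $ q))\<^sup>2)"
    have "psi a (W s) = ln (A powr (2 * a / real N) / B powr a)"
      unfolding psi_def prodW cardI A_def B_def ..
    also have "\<dots> = ln (A powr (2 * a / real N)) - ln (B powr a)"
      by (rule ln_divide_pos) (use pbpos Bpos betapos in \<open>simp_all add: A_def B_def less_imp_neq[symmetric]\<close>)
    also have "\<dots> = (2 * a / real N) * ln A - a * ln B"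
      using pbpos Bpos by (simp add: ln_powr A_def B_def)
    finally show ?thesis by (simp add: A_def B_def logsq_def)
  qed
  have goalP: "Phi P2 - psi a P2 \<le> Phi P1 - psi a P1"
    using Fmono unfolding W0[symmetric] W1[symmetric] psiW F_def by simp
  show ?thesis unfolding Let_def \<gamma>_def[symmetric] N_def[symmetric] P1_def[symmetric] P2_def[symmetric]
    by (rule goalP)
qed

end
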